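(* Let $\Gamma$ be a finite multiset of formulas and $A$ a formula of propositional logic. If the sequent $\Gamma \Rightarrow A$ is derivable in classical propositional logic (i.e. $\Gamma \vdash_c A$), then $\Pi_V, \Gamma \vdash_i A$ (i.e. $A$ is derivable in intuitionistic propositional logic from the assumptions $\Pi_V \cup \Gamma$), where \[ V = (\mathcal{V}^-(\Gamma) \cup \mathcal{V}^+(A)) \cap (\mathcal{V}^+_{ns}(\Gamma) \cup \mathcal{V}^-(A)). \]
   Context: Formulas are built from propositional variables and $\bot$ using $\land$, $\lor$, $\to$; $\lnot A$ abbreviates $A \to \bot$. For a set $V$ of propositional variables, $\Pi_V = \{ p \lor \lnot p \mid p \in V\}$. $\vdash_c$ and $\vdash_i$ denote derivability in classical and intuitionistic propositional logic respectively (e.g. in the cut-free sequent calculi G3cp and G3ip). The sets $\mathcal{V}^+(A)$, $\mathcal{V}^-(A)$ of variables occurring positively, negatively in $A$ are defined simultaneously by: $\mathcal{V}^+(p)=\{p\}$, $\mathcal{V}^+(\bot)=\emptyset$, $\mathcal{V}^+(A\land B)=\mathcal{V}^+(A\lor B)=\mathcal{V}^+(A)\cup\mathcal{V}^+(B)$, $\mathcal{V}^+(A\to B)=\mathcal{V}^-(A)\cup\mathcal{V}^+(B)$; $\mathcal{V}^-(p)=\mathcal{V}^-(\bot)=\emptyset$, $\mathcal{V}^-(A\land B)=\mathcal{V}^-(A\lor B)=\mathcal{V}^-(A)\cup\mathcal{V}^-(B)$, $\mathcal{V}^-(A\to B)=\mathcal{V}^+(A)\cup\mathcal{V}^-(B)$.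 The set $\mathcal{V}^+_{ns}(A)$ of variables occurring non-strictly positively is defined by $\mathcal{V}^+_{ns}(p)=\mathcal{V}^+_{ns}(\bot)=\emptyset$, $\mathcal{V}^+_{ns}(A\land B)=\mathcal{V}^+_{ns}(A\lor B)=\mathcal{V}^+_{ns}(A)\cup\mathcal{V}^+_{ns}(B)$, $\mathcal{V}^+_{ns}(A\to B)=\mathcal{V}^-(A)\cup\mathcal{V}^+_{ns}(B)$. For a finite multiset $\Gamma$, $\mathcal{V}^+(\Gamma)=\bigcup_{A\in\Gamma}\mathcal{V}^+(A)$, and similarly for $\mathcal{V}^-$ and $\mathcal{V}^+_{ns}$. *)

theory Defs
  imports "HOL-Library.Multiset"
begin

datatype 'v form = Var 'v | Bot | And "'v form" "'v form" | Or "'v form" "'v form" | Imp "'v form" "'v form"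

definition Neg :: "'v form \<Rightarrow> 'v form" where "Neg A = Imp A Bot"

inductive G3ip :: "'v form multiset \<Rightarrow> 'v form \<Rightarrow> bool" where
  Ax: "G3ip (add_mset (Var p) \<Gamma>) (Var p)"
| LBot: "G3ip (add_mset Bot \<Gamma>) C"
| LAnd: "G3ip (add_mset A (add_mset B \<Gamma>)) C \<Longrightarrow> G3ip (add_mset (And A B) \<Gamma>) C"
| RAnd: "G3ip \<Gamma> A \<Longrightarrow> G3ip \<Gamma> B \<Longrightarrow> G3ip \<Gamma> (And A B)"
| LOr: "G3ip (add_mset A \<Gamma>) C \<Longrightarrow> G3ip (add_mset B \<Gamma>) C \<Longrightarrow> G3ip (add_mset (Or A B) \<Gamma>) C"
| ROr1: "G3ip \<Gamma> A \<Longrightarrow> G3ip \<Gamma> (Or A B)"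
| ROr2: "G3ip \<Gamma> B \<Longrightarrow> G3ip \<Gamma> (Or A B)"
| LImp: "G3ip (add_mset (Imp A B) \<Gamma>) A \<Longrightarrow> G3ip (add_mset B \<Gamma>) C \<Longrightarrow> G3ip (add_mset (Imp A B) \<Gamma>) C"
| RImp: "G3ip (add_mset A \<Gamma>) B \<Longrightarrow> G3ip \<Gamma> (Imp A B)"

inductive G3cp :: "'v form multiset \<Rightarrow> 'v form multiset \<Rightarrow> bool" where
  Ax: "G3cp (add_mset (Var p) \<Gamma>) (add_mset (Var p) \<Delta>)"
| LBot: "G3cp (add_mset Bot \<Gamma>) \<Delta>"
| LAnd: "G3cp (add_mset A (add_mset B \<Gamma>)) \<Delta> \<Longrightarrow> G3cp (add_mset (And A B) \<Gamma>) \<Delta>"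
| RAnd: "G3cp \<Gamma> (add_mset A \<Delta>) \<Longrightarrow> G3cp \<Gamma> (add_mset B \<Delta>) \<Longrightarrow> G3cp \<Gamma> (add_mset (And A B) \<Delta>)"
| LOr: "G3cp (add_mset A \<Gamma>) \<Delta> \<Longrightarrow> G3cp (add_mset B \<Gamma>) \<Delta> \<Longrightarrow> G3cp (add_mset (Or A B) \<Gamma>) \<Delta>"
| ROr: "G3cp \<Gamma> (add_mset A (add_mset B \<Delta>)) \<Longrightarrow> G3cp \<Gamma> (add_mset (Or A B) \<Delta>)"
| LImp: "G3cp \<Gamma> (add_mset A \<Delta>) \<Longrightarrow> G3cp (add_mset B \<Gamma>) \<Delta> \<Longrightarrow> G3cp (add_mset (Imp A B) \<Gamma>) \<Delta>"
| RImp: "G3cp (add_mset A \<Gamma>) (add_mset B \<Delta>) \<Longrightarrow> G3cp \<Gamma> (add_mset (Imp A B) \<Delta>)"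

fun vpos :: "'v form \<Rightarrow> 'v set" and vneg :: "'v form \<Rightarrow> 'v set" where
  "vpos (Var p) = {p}"
| "vpos Bot = {}"
| "vpos (And A B) = vpos A \<union> vpos B"
| "vpos (Or A B) = vpos A \<union> vpos B"
| "vpos (Imp A B) = vneg A \<union> vpos B"
| "vneg (Var p) = {}"
| "vneg Bot = {}"
| "vneg (And A B) = vneg A \<union> vneg B"
| "vneg (Or A B) = vneg A \<union> vneg B"
| "vneg (Imp A B) = vpos A \<union> vneg B"

fun vns :: "'v form \<Rightarrow> 'v set" where
  "vns (Var p) = {}"
| "vns Bot = {}"
| "vns (And A B) = vns A \<union> vns B"
| "vns (Or A B) = vns A \<union> vns B"
| "vns (Imp A B) = vneg A \<union> vns B"

definition vposM :: "'v form multiset \<Rightarrow> 'v set" where "vposM \<Gamma> = (\<Union>A\<in>set_mset \<Gamma>. vpos A)"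
definition vnegM :: "'v form multiset \<Rightarrow> 'v set" where "vnegM \<Gamma> = (\<Union>A\<in>set_mset \<Gamma>. vneg A)"
definition vnsM :: "'v form multiset \<Rightarrow> 'v set" where "vnsM \<Gamma> = (\<Union>A\<in>set_mset \<Gamma>. vns A)"

definition PiV :: "'v set \<Rightarrow> 'v form multiset" where
  "PiV V = image_mset (\<lambda>p. Or (Var p) (Neg (Var p))) (mset_set V)"

end

theory Submission
  imports Defs
begin


lemma AxM: "Var p \<in># \<Gamma> \<Longrightarrow> G3ip \<Gamma> (Var p)"
  by (metis G3ip.Ax insert_DiffM)

lemma BotM: "Bot \<in># \<Gamma> \<Longrightarrow> G3ip \<Gamma> C"
  by (metis G3ip.LBot insert_DiffM)

lemma wk1: "G3ip \<Gamma> C \<Longrightarrow> G3ip (add_mset X \<Gamma>) C"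
proof (induction rule: G3ip.induct)
  case (Ax p \<Gamma>) then show ?case by (intro AxM) simp
next
  case (LBot \<Gamma> C) then show ?case by (intro BotM) simp
next
  case (LAnd A B \<Gamma> C)
  have "G3ip (add_mset (And A B) (add_mset X \<Gamma>)) C"
    by (rule G3ip.LAnd) (use LAnd.IH in \<open>simp add: add_mset_commute\<close>)
  then show ?case by (simp add: add_mset_commute)
next
  case (RAnd \<Gamma> A B) then show ?case by (intro G3ip.RAnd)
next
  case (LOr A \<Gamma> C B)
  have "G3ip (add_mset (Or A B) (add_mset X \<Gamma>)) C"
    by (rule G3ip.LOr) (use LOr.IH in \<open>simp_all add: add_mset_commute\<close>)
  then show ?case by (simp add: add_mset_commute)
next
  case (ROr1 \<Gamma> A B) then show ?case by (intro G3ip.ROr1)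
next
  case (ROr2 \<Gamma> B A) then show ?case by (intro G3ip.ROr2)
next
  case (LImp A B \<Gamma> C)
  have "G3ip (add_mset (Imp A B) (add_mset X \<Gamma>)) C"
    by (rule G3ip.LImp) (use LImp.IH in \<open>simp_all add: add_mset_commute\<close>)
  then show ?case by (simp add: add_mset_commute)
next
  case (RImp A \<Gamma> B)
  show ?case
    by (rule G3ip.RImp) (use RImp.IH in \<open>simp_all add: add_mset_commute\<close>)
qed

lemma wk: "G3ip \<Gamma> C \<Longrightarrow> G3ip (\<Gamma> + \<Delta>) C"
  by (induction \<Delta>) (auto intro: wk1)

lemma wks: "G3ip \<Gamma> C \<Longrightarrow> \<Gamma> \<subseteq># \<Gamma>' \<Longrightarrow> G3ip \<Gamma>' C"
  by (metis wk subset_mset.add_diff_inverse)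


lemma mem_of_eq: "add_mset X \<Gamma>0 = add_mset Y \<Gamma> \<Longrightarrow> X \<noteq> Y \<Longrightarrow> X \<in># \<Gamma>"
proof -
  assume a: "add_mset X \<Gamma>0 = add_mset Y \<Gamma>" and b: "X \<noteq> Y"
  have "X \<in># add_mset Y \<Gamma>" unfolding a[symmetric] by simp
  then show ?thesis using b by simp
qed

lemma invAnd: "G3ip \<Gamma>' C \<Longrightarrow> \<Gamma>' = add_mset (And A B) \<Gamma> \<Longrightarrow> G3ip (add_mset A (add_mset B (\<Gamma>))) C"
proof (induction arbitrary: \<Gamma> rule: G3ip.induct)
  case (Ax p \<Gamma>0) then show ?case using mem_of_eq[of "Var p" \<Gamma>0 "And A B" \<Gamma>] by (intro AxM) simp
next
  case (LBot \<Gamma>0 C) then show ?case using mem_of_eq[of "Bot" \<Gamma>0 "And A B" \<Gamma>] by (intro BotM) simp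
next
  case (LAnd A' B' \<Gamma>0 C)
  show ?case
  proof (cases "And A' B' = And A B")
    case True then show ?thesis using LAnd by auto
  next
    case False
    then obtain K where K: "\<Gamma>0 = add_mset (And A B) K" "\<Gamma> = add_mset (And A' B') K"
      using LAnd.prems by (auto simp: add_eq_conv_ex)
    have h: "G3ip (add_mset A (add_mset B (add_mset A' (add_mset B' K)))) C"
      using LAnd.IH[of "add_mset A' (add_mset B' K)"] K by (simp add: add_mset_commute)
    have "G3ip (add_mset (And A' B') (add_mset A (add_mset B (K)))) C"
      by (rule G3ip.LAnd) (use h in \<open>simp add: add_mset_commute\<close>)
    then show ?thesis by (simp add: K add_mset_commute)
  qed
next
  case (RAnd \<Gamma>0 A' B') then show ?case by (intro G3ip.RAnd) auto
next
  case (LOr A' \<Gamma>0 C B')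
  show ?case
  proof (cases "Or A' B' = And A B")
    case True then show ?thesis by auto
  next
    case False
    then obtain K where K: "\<Gamma>0 = add_mset (And A B) K" "\<Gamma> = add_mset (Or A' B') K"
      using LOr.prems by (auto simp: add_eq_conv_ex)
    have h1: "G3ip (add_mset A (add_mset B (add_mset A' K))) C"
      using LOr.IH(1)[of "add_mset A' K"] K by (simp add: add_mset_commute)
    have h2: "G3ip (add_mset A (add_mset B (add_mset B' K))) C"
      using LOr.IH(2)[of "add_mset B' K"] K by (simp add: add_mset_commute)
    have "G3ip (add_mset (Or A' B') (add_mset A (add_mset B (K)))) C"
      by (rule G3ip.LOr) (use h1 h2 in \<open>simp_all add: add_mset_commute\<close>)
    then show ?thesis by (simp add: K add_mset_commute)
  qed
next
  case (ROr1 \<Gamma>0 A' B') then show ?case by (intro G3ip.ROr1) auto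
next
  case (ROr2 \<Gamma>0 B' A') then show ?case by (intro G3ip.ROr2) auto
next
  case (LImp A' B' \<Gamma>0 C)
  show ?case
  proof (cases "Imp A' B' = And A B")
    case True then show ?thesis by auto
  next
    case False
    then obtain K where K: "\<Gamma>0 = add_mset (And A B) K" "\<Gamma> = add_mset (Imp A' B') K"
      using LImp.prems by (auto simp: add_eq_conv_ex)
    have h1: "G3ip (add_mset A (add_mset B (add_mset (Imp A' B') K))) A'"
      using LImp.IH(1)[of "add_mset (Imp A' B') K"] K by (simp add: add_mset_commute)
    have h2: "G3ip (add_mset A (add_mset B (add_mset B' K))) C"
      using LImp.IH(2)[of "add_mset B' K"] K by (simp add: add_mset_commute)
    have "G3ip (add_mset (Imp A' B') (add_mset A (add_mset B (K)))) C"
      by (rule G3ip.LImp) (use h1 h2 in \<open>simp_all add: add_mset_commute\<close>)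
    then show ?thesis by (simp add: K add_mset_commute)
  qed
next
  case (RImp A' \<Gamma>0 B')
  have h: "G3ip (add_mset A (add_mset B (add_mset A' \<Gamma>))) B'"
    using RImp.IH[of "add_mset A' \<Gamma>"] RImp.prems by (simp add: add_mset_commute)
  show ?case by (rule G3ip.RImp) (use h in \<open>simp add: add_mset_commute\<close>)
qed

lemma invOr1: "G3ip \<Gamma>' C \<Longrightarrow> \<Gamma>' = add_mset (Or A B) \<Gamma> \<Longrightarrow> G3ip (add_mset A (\<Gamma>)) C"
proof (induction arbitrary: \<Gamma> rule: G3ip.induct)
  case (Ax p \<Gamma>0) then show ?case using mem_of_eq[of "Var p" \<Gamma>0 "Or A B" \<Gamma>] by (intro AxM) simp
next
  case (LBot \<Gamma>0 C) then show ?case using mem_of_eq[of "Bot" \<Gamma>0 "Or A B" \<Gamma>] by (intro BotM) simp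
next
  case (LAnd A' B' \<Gamma>0 C)
  show ?case
  proof (cases "And A' B' = Or A B")
    case True then show ?thesis by auto
  next
    case False
    then obtain K where K: "\<Gamma>0 = add_mset (Or A B) K" "\<Gamma> = add_mset (And A' B') K"
      using LAnd.prems by (auto simp: add_eq_conv_ex)
    have h: "G3ip (add_mset A (add_mset A' (add_mset B' K))) C"
      using LAnd.IH[of "add_mset A' (add_mset B' K)"] K by (simp add: add_mset_commute)
    have "G3ip (add_mset (And A' B') (add_mset A (K))) C"
      by (rule G3ip.LAnd) (use h in \<open>simp add: add_mset_commute\<close>)
    then show ?thesis by (simp add: K add_mset_commute)
  qed
next
  case (RAnd \<Gamma>0 A' B') then show ?case by (intro G3ip.RAnd) auto
next
  case (LOr A' \<Gamma>0 C B')
  show ?case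
  proof (cases "Or A' B' = Or A B")
    case True then show ?thesis using LOr by auto
  next
    case False
    then obtain K where K: "\<Gamma>0 = add_mset (Or A B) K" "\<Gamma> = add_mset (Or A' B') K"
      using LOr.prems by (auto simp: add_eq_conv_ex)
    have h1: "G3ip (add_mset A (add_mset A' K)) C"
      using LOr.IH(1)[of "add_mset A' K"] K by (simp add: add_mset_commute)
    have h2: "G3ip (add_mset A (add_mset B' K)) C"
      using LOr.IH(2)[of "add_mset B' K"] K by (simp add: add_mset_commute)
    have "G3ip (add_mset (Or A' B') (add_mset A (K))) C"
      by (rule G3ip.LOr) (use h1 h2 in \<open>simp_all add: add_mset_commute\<close>)
    then show ?thesis by (simp add: K add_mset_commute)
  qed
next
  case (ROr1 \<Gamma>0 A' B') then show ?case by (intro G3ip.ROr1) auto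
next
  case (ROr2 \<Gamma>0 B' A') then show ?case by (intro G3ip.ROr2) auto
next
  case (LImp A' B' \<Gamma>0 C)
  show ?case
  proof (cases "Imp A' B' = Or A B")
    case True then show ?thesis by auto
  next
    case False
    then obtain K where K: "\<Gamma>0 = add_mset (Or A B) K" "\<Gamma> = add_mset (Imp A' B') K"
      using LImp.prems by (auto simp: add_eq_conv_ex)
    have h1: "G3ip (add_mset A (add_mset (Imp A' B') K)) A'"
      using LImp.IH(1)[of "add_mset (Imp A' B') K"] K by (simp add: add_mset_commute)
    have h2: "G3ip (add_mset A (add_mset B' K)) C"
      using LImp.IH(2)[of "add_mset B' K"] K by (simp add: add_mset_commute)
    have "G3ip (add_mset (Imp A' B') (add_mset A (K))) C"
      by (rule G3ip.LImp) (use h1 h2 in \<open>simp_all add: add_mset_commute\<close>)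
    then show ?thesis by (simp add: K add_mset_commute)
  qed
next
  case (RImp A' \<Gamma>0 B')
  have h: "G3ip (add_mset A (add_mset A' \<Gamma>)) B'"
    using RImp.IH[of "add_mset A' \<Gamma>"] RImp.prems by (simp add: add_mset_commute)
  show ?case by (rule G3ip.RImp) (use h in \<open>simp add: add_mset_commute\<close>)
qed

lemma invOr2: "G3ip \<Gamma>' C \<Longrightarrow> \<Gamma>' = add_mset (Or A B) \<Gamma> \<Longrightarrow> G3ip (add_mset B (\<Gamma>)) C"
proof (induction arbitrary: \<Gamma> rule: G3ip.induct)
  case (Ax p \<Gamma>0) then show ?case using mem_of_eq[of "Var p" \<Gamma>0 "Or A B" \<Gamma>] by (intro AxM) simp
next
  case (LBot \<Gamma>0 C) then show ?case using mem_of_eq[of "Bot" \<Gamma>0 "Or A B" \<Gamma>] by (intro BotM) simp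
next
  case (LAnd A' B' \<Gamma>0 C)
  show ?case
  proof (cases "And A' B' = Or A B")
    case True then show ?thesis by auto
  next
    case False
    then obtain K where K: "\<Gamma>0 = add_mset (Or A B) K" "\<Gamma> = add_mset (And A' B') K"
      using LAnd.prems by (auto simp: add_eq_conv_ex)
    have h: "G3ip (add_mset B (add_mset A' (add_mset B' K))) C"
      using LAnd.IH[of "add_mset A' (add_mset B' K)"] K by (simp add: add_mset_commute)
    have "G3ip (add_mset (And A' B') (add_mset B (K))) C"
      by (rule G3ip.LAnd) (use h in \<open>simp add: add_mset_commute\<close>)
    then show ?thesis by (simp add: K add_mset_commute)
  qed
next
  case (RAnd \<Gamma>0 A' B') then show ?case by (intro G3ip.RAnd) auto
next
  case (LOr A' \<Gamma>0 C B')
  show ?case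
  proof (cases "Or A' B' = Or A B")
    case True then show ?thesis using LOr by auto
  next
    case False
    then obtain K where K: "\<Gamma>0 = add_mset (Or A B) K" "\<Gamma> = add_mset (Or A' B') K"
      using LOr.prems by (auto simp: add_eq_conv_ex)
    have h1: "G3ip (add_mset B (add_mset A' K)) C"
      using LOr.IH(1)[of "add_mset A' K"] K by (simp add: add_mset_commute)
    have h2: "G3ip (add_mset B (add_mset B' K)) C"
      using LOr.IH(2)[of "add_mset B' K"] K by (simp add: add_mset_commute)
    have "G3ip (add_mset (Or A' B') (add_mset B (K))) C"
      by (rule G3ip.LOr) (use h1 h2 in \<open>simp_all add: add_mset_commute\<close>)
    then show ?thesis by (simp add: K add_mset_commute)
  qed
next
  case (ROr1 \<Gamma>0 A' B') then show ?case by (intro G3ip.ROr1) auto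
next
  case (ROr2 \<Gamma>0 B' A') then show ?case by (intro G3ip.ROr2) auto
next
  case (LImp A' B' \<Gamma>0 C)
  show ?case
  proof (cases "Imp A' B' = Or A B")
    case True then show ?thesis by auto
  next
    case False
    then obtain K where K: "\<Gamma>0 = add_mset (Or A B) K" "\<Gamma> = add_mset (Imp A' B') K"
      using LImp.prems by (auto simp: add_eq_conv_ex)
    have h1: "G3ip (add_mset B (add_mset (Imp A' B') K)) A'"
      using LImp.IH(1)[of "add_mset (Imp A' B') K"] K by (simp add: add_mset_commute)
    have h2: "G3ip (add_mset B (add_mset B' K)) C"
      using LImp.IH(2)[of "add_mset B' K"] K by (simp add: add_mset_commute)
    have "G3ip (add_mset (Imp A' B') (add_mset B (K))) C"
      by (rule G3ip.LImp) (use h1 h2 in \<open>simp_all add: add_mset_commute\<close>)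
    then show ?thesis by (simp add: K add_mset_commute)
  qed
next
  case (RImp A' \<Gamma>0 B')
  have h: "G3ip (add_mset B (add_mset A' \<Gamma>)) B'"
    using RImp.IH[of "add_mset A' \<Gamma>"] RImp.prems by (simp add: add_mset_commute)
  show ?case by (rule G3ip.RImp) (use h in \<open>simp add: add_mset_commute\<close>)
qed

lemma invImpR: "G3ip \<Gamma>' C \<Longrightarrow> \<Gamma>' = add_mset (Imp A B) \<Gamma> \<Longrightarrow> G3ip (add_mset B (\<Gamma>)) C"
proof (induction arbitrary: \<Gamma> rule: G3ip.induct)
  case (Ax p \<Gamma>0) then show ?case using mem_of_eq[of "Var p" \<Gamma>0 "Imp A B" \<Gamma>] by (intro AxM) simp
next
  case (LBot \<Gamma>0 C) then show ?case using mem_of_eq[of "Bot" \<Gamma>0 "Imp A B" \<Gamma>] by (intro BotM) simp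
next
  case (LAnd A' B' \<Gamma>0 C)
  show ?case
  proof (cases "And A' B' = Imp A B")
    case True then show ?thesis by auto
  next
    case False
    then obtain K where K: "\<Gamma>0 = add_mset (Imp A B) K" "\<Gamma> = add_mset (And A' B') K"
      using LAnd.prems by (auto simp: add_eq_conv_ex)
    have h: "G3ip (add_mset B (add_mset A' (add_mset B' K))) C"
      using LAnd.IH[of "add_mset A' (add_mset B' K)"] K by (simp add: add_mset_commute)
    have "G3ip (add_mset (And A' B') (add_mset B (K))) C"
      by (rule G3ip.LAnd) (use h in \<open>simp add: add_mset_commute\<close>)
    then show ?thesis by (simp add: K add_mset_commute)
  qed
next
  case (RAnd \<Gamma>0 A' B') then show ?case by (intro G3ip.RAnd) auto
next
  case (LOr A' \<Gamma>0 C B')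
  show ?case
  proof (cases "Or A' B' = Imp A B")
    case True then show ?thesis by auto
  next
    case False
    then obtain K where K: "\<Gamma>0 = add_mset (Imp A B) K" "\<Gamma> = add_mset (Or A' B') K"
      using LOr.prems by (auto simp: add_eq_conv_ex)
    have h1: "G3ip (add_mset B (add_mset A' K)) C"
      using LOr.IH(1)[of "add_mset A' K"] K by (simp add: add_mset_commute)
    have h2: "G3ip (add_mset B (add_mset B' K)) C"
      using LOr.IH(2)[of "add_mset B' K"] K by (simp add: add_mset_commute)
    have "G3ip (add_mset (Or A' B') (add_mset B (K))) C"
      by (rule G3ip.LOr) (use h1 h2 in \<open>simp_all add: add_mset_commute\<close>)
    then show ?thesis by (simp add: K add_mset_commute)
  qed
next
  case (ROr1 \<Gamma>0 A' B') then show ?case by (intro G3ip.ROr1) auto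
next
  case (ROr2 \<Gamma>0 B' A') then show ?case by (intro G3ip.ROr2) auto
next
  case (LImp A' B' \<Gamma>0 C)
  show ?case
  proof (cases "Imp A' B' = Imp A B")
    case True then show ?thesis using LImp by auto
  next
    case False
    then obtain K where K: "\<Gamma>0 = add_mset (Imp A B) K" "\<Gamma> = add_mset (Imp A' B') K"
      using LImp.prems by (auto simp: add_eq_conv_ex)
    have h1: "G3ip (add_mset B (add_mset (Imp A' B') K)) A'"
      using LImp.IH(1)[of "add_mset (Imp A' B') K"] K by (simp add: add_mset_commute)
    have h2: "G3ip (add_mset B (add_mset B' K)) C"
      using LImp.IH(2)[of "add_mset B' K"] K by (simp add: add_mset_commute)
    have "G3ip (add_mset (Imp A' B') (add_mset B (K))) C"
      by (rule G3ip.LImp) (use h1 h2 in \<open>simp_all add: add_mset_commute\<close>)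
    then show ?thesis by (simp add: K add_mset_commute)
  qed
next
  case (RImp A' \<Gamma>0 B')
  have h: "G3ip (add_mset B (add_mset A' \<Gamma>)) B'"
    using RImp.IH[of "add_mset A' \<Gamma>"] RImp.prems by (simp add: add_mset_commute)
  show ?case by (rule G3ip.RImp) (use h in \<open>simp add: add_mset_commute\<close>)
qed



lemma eq2: "add_mset X \<Gamma>0 = add_mset D (add_mset D \<Gamma>) \<Longrightarrow> X \<noteq> D \<Longrightarrow>
  \<exists>K. \<Gamma>0 = add_mset D (add_mset D K) \<and> \<Gamma> = add_mset X K"
proof -
  assume a: "add_mset X \<Gamma>0 = add_mset D (add_mset D \<Gamma>)" and b: "X \<noteq> D"
  then obtain K1 where K1: "\<Gamma>0 = add_mset D K1" "add_mset D \<Gamma> = add_mset X K1"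
    by (auto simp: add_eq_conv_ex)
  then obtain K where "K1 = add_mset D K" "\<Gamma> = add_mset X K"
    using b by (auto simp: add_eq_conv_ex)
  then show ?thesis using K1 by auto
qed

lemma contr_aux:
  fixes D :: "'v form"
  assumes "G3ip \<Gamma>' C" "\<Gamma>' = add_mset D (add_mset D \<Gamma>)"
    and H: "\<And>(E::'v form) \<Delta> C'. size E < size D \<Longrightarrow> G3ip (add_mset E (add_mset E \<Delta>)) C' \<Longrightarrow> G3ip (add_mset E \<Delta>) C'"
  shows "G3ip (add_mset D \<Gamma>) C"
  using assms(1,2)
proof (induction arbitrary: \<Gamma> rule: G3ip.induct)
  case (Ax p \<Gamma>0) then show ?case
    by (metis AxM add_mset_add_single union_iff union_single_eq_member)
next
  case (LBot \<Gamma>0 C) then show ?case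
    by (metis BotM add_mset_add_single union_iff union_single_eq_member)
next
  case (LAnd A' B' \<Gamma>0 C)
  show ?case
  proof (cases "And A' B' = D")
    case True
    then have g0: "\<Gamma>0 = add_mset D \<Gamma>" using LAnd.prems by auto
    have "G3ip (add_mset A' (add_mset B' (add_mset A' (add_mset B' \<Gamma>)))) C"
      by (rule invAnd[OF LAnd.hyps]) (simp add: g0 True[symmetric] add_mset_commute)
    then have "G3ip (add_mset A' (add_mset A' (add_mset B' (add_mset B' \<Gamma>)))) C"
      by (simp add: add_mset_commute)
    then have "G3ip (add_mset A' (add_mset B' (add_mset B' \<Gamma>))) C"
      using H[of A'] True by auto
    then have "G3ip (add_mset B' (add_mset B' (add_mset A' \<Gamma>))) C"
      by (simp add: add_mset_commute)
    then have "G3ip (add_mset B' (add_mset A' \<Gamma>)) C"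
      using H[of B'] True by auto
    then have "G3ip (add_mset (And A' B') \<Gamma>) C"
      by (intro G3ip.LAnd) (simp add: add_mset_commute)
    then show ?thesis using True by simp
  next
    case False
    then obtain K where K: "\<Gamma>0 = add_mset D (add_mset D K)" "\<Gamma> = add_mset (And A' B') K"
      using eq2[OF LAnd.prems] by auto
    have h: "G3ip (add_mset D (add_mset A' (add_mset B' K))) C"
      using LAnd.IH[of "add_mset A' (add_mset B' K)"] K by (simp add: add_mset_commute)
    have "G3ip (add_mset (And A' B') (add_mset D K)) C"
      by (rule G3ip.LAnd) (use h in \<open>simp add: add_mset_commute\<close>)
    then show ?thesis by (simp add: K add_mset_commute)
  qed
next
  case (RAnd \<Gamma>0 A' B') then show ?case by (intro G3ip.RAnd) auto
next
  case (LOr A' \<Gamma>0 C B')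
  show ?case
  proof (cases "Or A' B' = D")
    case True
    then have g0: "\<Gamma>0 = add_mset D \<Gamma>" using LOr.prems by auto
    have "G3ip (add_mset A' (add_mset A' \<Gamma>)) C"
      by (rule invOr1[OF LOr.hyps(1), where B=B']) (simp add: g0 True[symmetric] add_mset_commute)
    then have 1: "G3ip (add_mset A' \<Gamma>) C" using H[of A'] True by auto
    have "G3ip (add_mset B' (add_mset B' \<Gamma>)) C"
      by (rule invOr2[OF LOr.hyps(2), where A=A']) (simp add: g0 True[symmetric] add_mset_commute)
    then have 2: "G3ip (add_mset B' \<Gamma>) C" using H[of B'] True by auto
    show ?thesis using G3ip.LOr[OF 1 2] True by simp
  next
    case False
    then obtain K where K: "\<Gamma>0 = add_mset D (add_mset D K)" "\<Gamma> = add_mset (Or A' B') K"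
      using eq2[OF LOr.prems] by auto
    have h1: "G3ip (add_mset D (add_mset A' K)) C"
      using LOr.IH(1)[of "add_mset A' K"] K by (simp add: add_mset_commute)
    have h2: "G3ip (add_mset D (add_mset B' K)) C"
      using LOr.IH(2)[of "add_mset B' K"] K by (simp add: add_mset_commute)
    have "G3ip (add_mset (Or A' B') (add_mset D K)) C"
      by (rule G3ip.LOr) (use h1 h2 in \<open>simp_all add: add_mset_commute\<close>)
    then show ?thesis by (simp add: K add_mset_commute)
  qed
next
  case (ROr1 \<Gamma>0 A' B') then show ?case by (intro G3ip.ROr1) auto
next
  case (ROr2 \<Gamma>0 B' A') then show ?case by (intro G3ip.ROr2) auto
next
  case (LImp A' B' \<Gamma>0 C)
  show ?case
  proof (cases "Imp A' B' = D")
    case True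
    then have g0: "\<Gamma>0 = add_mset D \<Gamma>" using LImp.prems by auto
    have 1: "G3ip (add_mset D \<Gamma>) A'"
      using LImp.IH(1)[of \<Gamma>] g0 True by simp
    have "G3ip (add_mset B' (add_mset B' \<Gamma>)) C"
      by (rule invImpR[OF LImp.hyps(2), where A=A']) (simp add: g0 True[symmetric] add_mset_commute)
    then have 2: "G3ip (add_mset B' \<Gamma>) C" using H[of B'] True by auto
    show ?thesis using G3ip.LImp[of A' B' \<Gamma> C] 1 2 True by simp
  next
    case False
    then obtain K where K: "\<Gamma>0 = add_mset D (add_mset D K)" "\<Gamma> = add_mset (Imp A' B') K"
      using eq2[OF LImp.prems] by auto
    have h1: "G3ip (add_mset D (add_mset (Imp A' B') K)) A'"
      using LImp.IH(1)[of "add_mset (Imp A' B') K"] K by (simp add: add_mset_commute)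
    have h2: "G3ip (add_mset D (add_mset B' K)) C"
      using LImp.IH(2)[of "add_mset B' K"] K by (simp add: add_mset_commute)
    have "G3ip (add_mset (Imp A' B') (add_mset D K)) C"
      by (rule G3ip.LImp) (use h1 h2 in \<open>simp_all add: add_mset_commute\<close>)
    then show ?thesis by (simp add: K add_mset_commute)
  qed
next
  case (RImp A' \<Gamma>0 B')
  have h: "G3ip (add_mset D (add_mset A' \<Gamma>)) B'"
    using RImp.IH[of "add_mset A' \<Gamma>"] RImp.prems by (simp add: add_mset_commute)
  show ?case by (rule G3ip.RImp) (use h in \<open>simp add: add_mset_commute\<close>)
qed

lemma contr: "G3ip (add_mset D (add_mset D \<Gamma>)) C \<Longrightarrow> G3ip (add_mset D \<Gamma>) C"
proof (induction D arbitrary: \<Gamma> C rule: measure_induct_rule[where f=size])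
  case (less D)
  show ?case by (rule contr_aux[OF less.prems refl]) (use less.IH in auto)
qed

lemma contrM: "D \<in># \<Gamma> \<Longrightarrow> G3ip (add_mset D \<Gamma>) C \<Longrightarrow> G3ip \<Gamma> C"
  by (metis contr insert_DiffM)



definition Der :: "'v form set \<Rightarrow> 'v form \<Rightarrow> bool" where
  "Der T G \<longleftrightarrow> G3ip (mset_set T) G"

definition sclosed :: "'v form set \<Rightarrow> bool" where
  "sclosed S \<longleftrightarrow> (\<forall>B C. And B C \<in> S \<longrightarrow> B \<in> S \<and> C \<in> S) \<and> (\<forall>B C. Or B C \<in> S \<longrightarrow> B \<in> S \<and> C \<in> S)
     \<and> (\<forall>B C. Imp B C \<in> S \<longrightarrow> B \<in> S \<and> C \<in> S)"

definition sat :: "'v form set \<Rightarrow> 'v form set \<Rightarrow> bool" where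
  "sat S T \<longleftrightarrow> T \<subseteq> S \<and> Bot \<notin> T \<and> (\<forall>B C. And B C \<in> T \<longrightarrow> B \<in> T \<and> C \<in> T)
     \<and> (\<forall>B C. Or B C \<in> T \<longrightarrow> B \<in> T \<or> C \<in> T) \<and> (\<forall>B C. Imp B C \<in> T \<longrightarrow> C \<in> T \<or> \<not> Der T B)"

fun frc :: "'v form set \<Rightarrow> 'v form set \<Rightarrow> 'v form \<Rightarrow> bool" where
  "frc S T (Var p) = (Var p \<in> T)"
| "frc S T Bot = False"
| "frc S T (And A B) = (frc S T A \<and> frc S T B)"
| "frc S T (Or A B) = (frc S T A \<or> frc S T B)"
| "frc S T (Imp A B) = (\<forall>T'. sat S T' \<longrightarrow> T \<subseteq> T' \<longrightarrow> frc S T' A \<longrightarrow> frc S T' B)"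

lemma Der_ins: "finite T \<Longrightarrow> Der (insert B T) G \<Longrightarrow> G3ip (add_mset B (mset_set T)) G"
  by (cases "B \<in> T") (auto simp: Der_def insert_absorb intro: wk1)

lemma Der_mem: "finite T \<Longrightarrow> F \<in> T \<Longrightarrow> G3ip (add_mset F (mset_set T)) G \<Longrightarrow> Der T G"
  unfolding Der_def by (rule contrM) auto

lemma saturate:
  assumes fin: "finite S" and cl: "sclosed S" and sub: "S0 \<subseteq> S" and nd: "\<not> Der S0 G"
  shows "\<exists>T. sat S T \<and> S0 \<subseteq> T \<and> \<not> Der T G"
proof -
  let ?F = "{T. S0 \<subseteq> T \<and> T \<subseteq> S \<and> \<not> Der T G}"
  have "?F \<subseteq> Pow S" by blast
  then have "finite ?F" using fin finite_subset by blast
  moreover have "S0 \<in> ?F" using sub nd by auto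
  ultimately obtain T where T: "T \<in> ?F" and mx: "\<forall>b\<in>?F. T \<le> b \<longrightarrow> T = b"
    using finite_has_maximal2[of ?F S0] by auto
  have TS: "T \<subseteq> S" and nT: "\<not> Der T G" and S0T: "S0 \<subseteq> T" using T by auto
  have finT: "finite T" using TS fin finite_subset by blast
  have ins: "G3ip (add_mset F (mset_set T)) G" if "F \<in> S" "F \<notin> T" for F
  proof -
    have "insert F T \<notin> ?F"
    proof
      assume "insert F T \<in> ?F"
      then have "T = insert F T" using mx by blast
      then show False using that by blast
    qed
    moreover have "S0 \<subseteq> insert F T" "insert F T \<subseteq> S" using S0T TS that by auto
    ultimately have "Der (insert F T) G" by blast
    then show ?thesis using Der_ins finT by blast
  qed
  have "sat S T" unfolding sat_def
  proof (intro conjI allI impI)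
    show "T \<subseteq> S" by fact
    show "Bot \<notin> T"
    proof
      assume "Bot \<in> T"
      then have "Der T G" unfolding Der_def using finT by (intro BotM) simp
      then show False using nT by simp
    qed
  next
    fix B C assume a: "And B C \<in> T"
    have BC: "B \<in> S" "C \<in> S" using TS cl a unfolding sclosed_def by blast+
    show "B \<in> T"
    proof (rule ccontr)
      assume nb: "B \<notin> T"
      have "G3ip (add_mset B (mset_set T)) G" by (rule ins[OF BC(1) nb])
      then have "G3ip (add_mset C (add_mset B (mset_set T))) G" by (rule wk1)
      then have "G3ip (add_mset (And B C) (mset_set T)) G" using G3ip.LAnd[of B C "mset_set T" G] by (simp add: add_mset_commute)
      from Der_mem[OF finT a this] nT show False by simp
    qed
    show "C \<in> T"
    proof (rule ccontr)
      assume nc: "C \<notin> T"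
      have "G3ip (add_mset C (mset_set T)) G" by (rule ins[OF BC(2) nc])
      then have "G3ip (add_mset B (add_mset C (mset_set T))) G" by (rule wk1)
      then have "G3ip (add_mset (And B C) (mset_set T)) G" by (rule G3ip.LAnd[of B C])
      from Der_mem[OF finT a this] nT show False by simp
    qed
  next
    fix B C assume a: "Or B C \<in> T"
    have BC: "B \<in> S" "C \<in> S" using TS cl a unfolding sclosed_def by blast+
    show "B \<in> T \<or> C \<in> T"
    proof (rule ccontr)
      assume h: "\<not> (B \<in> T \<or> C \<in> T)"
      then have nb: "B \<notin> T" and nc: "C \<notin> T" by auto
      have "G3ip (add_mset (Or B C) (mset_set T)) G" by (rule G3ip.LOr[OF ins[OF BC(1) nb] ins[OF BC(2) nc]])
      from Der_mem[OF finT a this] nT show False by simp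
    qed
  next
    fix B C assume a: "Imp B C \<in> T"
    have BC: "B \<in> S" "C \<in> S" using TS cl a unfolding sclosed_def by blast+
    show "C \<in> T \<or> \<not> Der T B"
    proof (rule ccontr)
      assume h: "\<not> (C \<in> T \<or> \<not> Der T B)"
      then have c: "C \<notin> T" and d: "Der T B" by auto
      have "G3ip (add_mset (Imp B C) (mset_set T)) B" using d unfolding Der_def by (rule wk1)
      then have "G3ip (add_mset (Imp B C) (mset_set T)) G" by (rule G3ip.LImp[OF _ ins[OF BC(2) c]])
      from Der_mem[OF finT a this] nT show False by simp
    qed
  qed
  then show ?thesis using S0T nT by blast
qed

lemma sat_fin: "finite S \<Longrightarrow> sat S T \<Longrightarrow> finite T"
  unfolding sat_def using finite_subset by blast

lemma satD: assumes "sat S T"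
  shows "T \<subseteq> S" "Bot \<notin> T" "And B C \<in> T \<Longrightarrow> B \<in> T" "And B C \<in> T \<Longrightarrow> C \<in> T"
    "Or B C \<in> T \<Longrightarrow> B \<in> T \<or> C \<in> T" "Imp B C \<in> T \<Longrightarrow> C \<in> T \<or> \<not> Der T B"
  using assms unfolding sat_def by blast+

lemma sclD: assumes "sclosed S"
  shows "And B C \<in> S \<Longrightarrow> B \<in> S" "And B C \<in> S \<Longrightarrow> C \<in> S"
    "Or B C \<in> S \<Longrightarrow> B \<in> S" "Or B C \<in> S \<Longrightarrow> C \<in> S"
    "Imp B C \<in> S \<Longrightarrow> B \<in> S" "Imp B C \<in> S \<Longrightarrow> C \<in> S"
  using assms unfolding sclosed_def by blast+

lemma truth:
  assumes fin: "finite S" and cl: "sclosed S"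
  shows "F \<in> S \<Longrightarrow> sat S T \<Longrightarrow> (F \<in> T \<longrightarrow> frc S T F) \<and> (\<not> Der T F \<longrightarrow> \<not> frc S T F)"
proof (induction F arbitrary: T)
  case (Var p)
  have finT: "finite T" using sat_fin[OF fin Var.prems(2)] .
  have "Var p \<in> T \<Longrightarrow> Der T (Var p)" unfolding Der_def by (rule AxM) (simp add: finT)
  then show ?case by auto
next
  case Bot
  then show ?case using satD(2)[OF Bot.prems(2)] by simp
next
  case (And B C)
  have BC: "B \<in> S" "C \<in> S" using sclD[OF cl] And.prems(1) by blast+
  note I1 = And.IH(1)[OF BC(1) And.prems(2)] and I2 = And.IH(2)[OF BC(2) And.prems(2)]
  show ?case
  proof (intro conjI impI)
    assume a: "And B C \<in> T"
    have "B \<in> T" "C \<in> T" using satD(3,4)[OF And.prems(2) a] .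
    then show "frc S T (And B C)" using I1 I2 by simp
  next
    assume n: "\<not> Der T (And B C)"
    show "\<not> frc S T (And B C)"
    proof
      assume "frc S T (And B C)"
      then have "Der T B" "Der T C" using I1 I2 by auto
      then have "Der T (And B C)" unfolding Der_def by (rule G3ip.RAnd)
      then show False using n by simp
    qed
  qed
next
  case (Or B C)
  have BC: "B \<in> S" "C \<in> S" using sclD[OF cl] Or.prems(1) by blast+
  note I1 = Or.IH(1)[OF BC(1) Or.prems(2)] and I2 = Or.IH(2)[OF BC(2) Or.prems(2)]
  show ?case
  proof (intro conjI impI)
    assume a: "Or B C \<in> T"
    have "B \<in> T \<or> C \<in> T" using satD(5)[OF Or.prems(2) a] .
    then show "frc S T (Or B C)" using I1 I2 by auto
  next
    assume n: "\<not> Der T (Or B C)"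
    show "\<not> frc S T (Or B C)"
    proof
      assume "frc S T (Or B C)"
      then have "Der T B \<or> Der T C" using I1 I2 by auto
      then have "Der T (Or B C)" unfolding Der_def using G3ip.ROr1 G3ip.ROr2 by blast
      then show False using n by simp
    qed
  qed
next
  case (Imp B C)
  have BC: "B \<in> S" "C \<in> S" using sclD[OF cl] Imp.prems(1) by blast+
  have finT: "finite T" using sat_fin[OF fin Imp.prems(2)] .
  show ?case
  proof (intro conjI impI)
    assume a: "Imp B C \<in> T"
    show "frc S T (Imp B C)"
    proof (simp only: frc.simps, intro allI impI)
      fix T' assume s: "sat S T'" and TT: "T \<subseteq> T'" and fB: "frc S T' B"
      have "Imp B C \<in> T'" using a TT by blast
      then have "C \<in> T' \<or> \<not> Der T' B" by (rule satD(6)[OF s])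
      moreover note Imp.IH(1)[OF BC(1) s] Imp.IH(2)[OF BC(2) s]
      ultimately show "frc S T' C" using fB by blast
    qed
  next
    assume n: "\<not> Der T (Imp B C)"
    have nd: "\<not> Der (insert B T) C"
    proof
      assume "Der (insert B T) C"
      then have "G3ip (add_mset B (mset_set T)) C" using Der_ins finT by blast
      then have "Der T (Imp B C)" unfolding Der_def by (rule G3ip.RImp)
      then show False using n by simp
    qed
    have "insert B T \<subseteq> S" using BC satD(1)[OF Imp.prems(2)] by blast
    then obtain T' where T': "sat S T'" "insert B T \<subseteq> T'" "\<not> Der T' C"
      using saturate[OF fin cl _ nd] by blast
    have "B \<in> T'" using T'(2) by blast
    then have "frc S T' B" using Imp.IH(1)[OF BC(1) T'(1)] by blast
    moreover have "\<not> frc S T' C" using Imp.IH(2)[OF BC(2) T'(1)] T'(3) by blast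
    moreover have "T \<subseteq> T'" using T'(2) by blast
    ultimately show "\<not> frc S T (Imp B C)" using T'(1) by auto
  qed
qed



fun ev :: "('v \<Rightarrow> bool) \<Rightarrow> 'v form \<Rightarrow> bool" where
  "ev v (Var p) = v p"
| "ev v Bot = False"
| "ev v (And A B) = (ev v A \<and> ev v B)"
| "ev v (Or A B) = (ev v A \<or> ev v B)"
| "ev v (Imp A B) = (ev v A \<longrightarrow> ev v B)"

lemma G3cp_sound: "G3cp \<Gamma> \<Delta> \<Longrightarrow> (\<forall>F\<in>#\<Gamma>. ev v F) \<Longrightarrow> (\<exists>F\<in>#\<Delta>. ev v F)"
  by (induction rule: G3cp.induct) auto

fun sub :: "'v form \<Rightarrow> 'v form set" where
  "sub (Var p) = {Var p}"
| "sub Bot = {Bot}"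
| "sub (And A B) = insert (And A B) (sub A \<union> sub B)"
| "sub (Or A B) = insert (Or A B) (sub A \<union> sub B)"
| "sub (Imp A B) = insert (Imp A B) (sub A \<union> sub B)"

lemma sub_fin: "finite (sub F)" by (induction F) auto
lemma sub_self: "F \<in> sub F" by (cases F) auto
lemma sub_cl: "(And B C \<in> sub F \<longrightarrow> B \<in> sub F \<and> C \<in> sub F) \<and> (Or B C \<in> sub F \<longrightarrow> B \<in> sub F \<and> C \<in> sub F)
   \<and> (Imp B C \<in> sub F \<longrightarrow> B \<in> sub F \<and> C \<in> sub F)"
  by (induction F) (auto simp: sub_self)

lemma sclosed_U: "sclosed (\<Union>(sub ` Q))"
  unfolding sclosed_def using sub_cl by blast

lemma fin_v: "finite (vpos F) \<and> finite (vneg F)" by (induction F) auto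

lemma claims:
  assumes r: "sat S r" and dec: "\<And>p. p \<in> V \<Longrightarrow> frc S r (Var p) \<or> frc S r (Neg (Var p))"
  shows "sat S w \<Longrightarrow> r \<subseteq> w \<Longrightarrow>
    (vpos F \<subseteq> V \<union> -X \<longrightarrow> vneg F \<subseteq> X \<longrightarrow> frc S w F \<longrightarrow> ev (\<lambda>p. p \<notin> X \<or> Var p \<in> r) F) \<and>
    (vpos F \<subseteq> X \<longrightarrow> vneg F \<subseteq> V \<union> -X \<longrightarrow> ev (\<lambda>p. p \<notin> X \<or> Var p \<in> r) F \<longrightarrow> frc S w F)"
proof (induction F arbitrary: w)
  case (Var p)
  have c1: "p \<notin> X \<or> Var p \<in> r" if "p \<in> V \<union> -X" "Var p \<in> w"
  proof (cases "p \<in> V")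
    case True
    then have "frc S r (Var p) \<or> frc S r (Neg (Var p))" by (rule dec)
    then show ?thesis
    proof
      assume "frc S r (Neg (Var p))"
      then have "frc S w (Var p) \<longrightarrow> False" using Var.prems unfolding Neg_def by simp
      then show ?thesis using that by simp
    qed simp
  next
    case False then show ?thesis using that by simp
  qed
  show ?case using c1 Var.prems(2) by auto
next
  case Bot then show ?case by simp
next
  case (And G H)
  show ?case using And.IH[OF And.prems] by auto
next
  case (Or G H)
  show ?case using Or.IH[OF Or.prems] by auto
next
  case (Imp G H)
  let ?v = "\<lambda>p. p \<notin> X \<or> Var p \<in> r"
  show ?case
  proof (intro conjI impI)
    assume p1: "vpos (Imp G H) \<subseteq> V \<union> -X" and n1: "vneg (Imp G H) \<subseteq> X" and f: "frc S w (Imp G H)"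
    show "ev ?v (Imp G H)"
    proof (simp only: ev.simps, intro impI)
      assume eG: "ev ?v G"
      have "frc S w G" using Imp.IH(1)[OF Imp.prems] p1 n1 eG by auto
      then have "frc S w H" using f Imp.prems(1) by auto
      then show "ev ?v H" using Imp.IH(2)[OF Imp.prems] p1 n1 by auto
    qed
  next
    assume p1: "vpos (Imp G H) \<subseteq> X" and n1: "vneg (Imp G H) \<subseteq> V \<union> -X" and e: "ev ?v (Imp G H)"
    show "frc S w (Imp G H)"
    proof (simp only: frc.simps, intro allI impI)
      fix T' assume s: "sat S T'" and wT: "w \<subseteq> T'" and fG: "frc S T' G"
      have rT: "r \<subseteq> T'" using Imp.prems(2) wT by blast
      have "ev ?v G" using Imp.IH(1)[OF s rT] p1 n1 fG by auto
      then have "ev ?v H" using e by simp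
      then show "frc S T' H" using Imp.IH(2)[OF s rT] p1 n1 by auto
    qed
  qed
qed

lemma strict:
  assumes r: "sat S r" and dec: "\<And>p. p \<in> V \<Longrightarrow> frc S r (Var p) \<or> frc S r (Neg (Var p))"
  shows "vns F \<subseteq> V \<union> -X \<longrightarrow> vneg F \<subseteq> X \<longrightarrow> frc S r F \<longrightarrow> ev (\<lambda>p. p \<notin> X \<or> Var p \<in> r) F"
proof (induction F)
  case (Imp G H)
  let ?v = "\<lambda>p. p \<notin> X \<or> Var p \<in> r"
  show ?case
  proof (intro impI)
    assume p1: "vns (Imp G H) \<subseteq> V \<union> -X" and n1: "vneg (Imp G H) \<subseteq> X" and f: "frc S r (Imp G H)"
    show "ev ?v (Imp G H)"
    proof (simp only: ev.simps, intro impI)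
      assume eG: "ev ?v G"
      have "frc S r G" using claims[OF r dec r subset_refl, where F=G and X=X] p1 n1 eG by auto
      then have "frc S r H" using f r by auto
      then show "ev ?v H" using Imp.IH(2) p1 n1 by auto
    qed
  qed
qed auto



theorem mainTheorem1:
  fixes \<Gamma> :: "'v form multiset" and A :: "'v form"
  assumes "G3cp \<Gamma> {#A#}"
  shows "G3ip (PiV ((vnegM \<Gamma> \<union> vpos A) \<inter> (vnsM \<Gamma> \<union> vneg A)) + \<Gamma>) A"
proof (rule ccontr)
  define X where "X = vnegM \<Gamma> \<union> vpos A"
  define Y where "Y = vnsM \<Gamma> \<union> vneg A"
  define V where "V = X \<inter> Y"
  define M where "M = PiV V + \<Gamma>"
  define S0 where "S0 = set_mset M"
  define Sg where "Sg = \<Union>(sub ` insert A S0)"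
  assume "\<not> G3ip (PiV ((vnegM \<Gamma> \<union> vpos A) \<inter> (vnsM \<Gamma> \<union> vneg A)) + \<Gamma>) A"
  then have nM: "\<not> G3ip M A" unfolding M_def V_def X_def Y_def .
  have finSg: "finite Sg" unfolding Sg_def S0_def using sub_fin by auto
  have clSg: "sclosed Sg" unfolding Sg_def by (rule sclosed_U)
  have S0Sg: "S0 \<subseteq> Sg" unfolding Sg_def using sub_self by blast
  have ASg: "A \<in> Sg" unfolding Sg_def using sub_self by blast
  have nD: "\<not> Der S0 A"
  proof
    assume "Der S0 A"
    then have "G3ip (mset_set (set_mset M)) A" unfolding Der_def S0_def .
    then have "G3ip M A" using wks mset_set_set_mset_msubset by blast
    then show False using nM by simp
  qed
  obtain r where r: "sat Sg r" "S0 \<subseteq> r" "\<not> Der r A"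
    using saturate[OF finSg clSg S0Sg nD] by blast
  have fS: "frc Sg r F" if "F \<in> S0" for F
    using truth[OF finSg clSg _ r(1), of F] that S0Sg r(2) by blast
  have nA: "\<not> frc Sg r A" using truth[OF finSg clSg ASg r(1)] r(3) by blast
  have finX: "finite X" unfolding X_def vnegM_def using fin_v by auto
  have finV: "finite V" unfolding V_def using finX by auto
  have dec: "frc Sg r (Var p) \<or> frc Sg r (Neg (Var p))" if "p \<in> V" for p
  proof -
    have "Or (Var p) (Neg (Var p)) \<in> S0"
      unfolding S0_def M_def PiV_def using that finV by auto
    then show ?thesis using fS by fastforce
  qed
  let ?v = "\<lambda>p. p \<notin> X \<or> Var p \<in> r"
  have eG: "\<forall>F\<in>#\<Gamma>. ev ?v F"
  proof
    fix F assume F: "F \<in># \<Gamma>"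
    have "vns F \<subseteq> V \<union> -X" using F unfolding V_def Y_def vnsM_def by auto
    moreover have "vneg F \<subseteq> X" using F unfolding X_def vnegM_def by auto
    moreover have "frc Sg r F" using fS F unfolding S0_def M_def by simp
    ultimately show "ev ?v F" using strict[OF r(1) dec, where F=F and X=X] by blast
  qed
  have "\<exists>F\<in>#{#A#}. ev ?v F" by (rule G3cp_sound[OF assms eG])
  then have eA: "ev ?v A" by simp
  have "vpos A \<subseteq> X" "vneg A \<subseteq> V \<union> -X" unfolding X_def V_def Y_def by auto
  then have "frc Sg r A" using claims[OF r(1) dec r(1) subset_refl, where F=A and X=X] eA by blast
  then show False using nA by simp
qed


end
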